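(* Let $M$ be a graded $R$-module. If the map $\psi^q$ is surjective, then for every $r\in h(R)$ the open set $GX_r^{qp.M}$ of $qp.Spec_g(M)$ (with the quasi-Zariski topology) is quasi-compact. In particular, $qp.Spec_g(M)$ with the quasi-Zariski topology is quasi-compact.
   Context: $R=\bigoplus_{g\in G}R_g$ is a graded commutative ring with identity graded by a group $G$, $h(R)=\bigcup_g R_g$; $M$ is a graded $R$-module, $h(M)$ its homogeneous elements. $Gr(I)$ is the graded radical of a graded ideal $I$. $(K:_RM)=\{r: rM\subseteq K\}$. Graded prime submodule: proper graded $P$ with $rm\in P$ ($r\in h(R), m\in h(M)$) implying $m\in P$ or $r\in(P:_RM)$. $Gr_M(K)$: intersection of graded prime submodules containing $K$ ($M$ if none). Graded primeful property of $K$: for each graded prime $p\supseteq(K:_RM)$ there is a graded prime submodule $P\supseteq K$ with $(P:_RM)=p$. Graded quasi-primary submodule: proper graded $Q$ with $rm\in Q$ ($r\in h(R),m\in h(M)$) implying $r\in Gr((Q:_RM))$ or $m\in Gr_M(Q)$. $qp.Spec_g(M)$: graded quasi-primary submodules with the graded primeful property. $qp\text{-}V_M^g(K)=\{Q\in qp.Spec_g(M): Gr((Q:_RM))\supseteq Gr((K:_RM))\}$; the quasi-Zariski topology has closed sets exactly these. $GX_r^{qp.M}=qp.Spec_g(M)\setminus qp\text{-}V_M^g(rM)$. $\overline R=R/\mathrm{Ann}(M)$. A graded quasi-primary ideal of $\overline R$ is a proper graded ideal $q$ with $ab\in q$ ($a,b$ homogeneous) implying $a\in Gr(q)$ or $b\in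 Gr(q)$; $qp.Spec_g(\overline R)$ is the set of them. $\psi^q:qp.Spec_g(M)\to qp.Spec_g(\overline R)$ is $\psi^q(Q)=(Q:_RM)/\mathrm{Ann}(M)$. *)

theory Defs
  imports "HOL-Algebra.Algebra"
begin

text \<open>A grading of the additive structure of A (a ring, or the additive group of a module)
  by the family Ag: c is the homogeneous decomposition of x.\<close>
definition gdecomp :: "('x, 'e) ring_scheme \<Rightarrow> ('g \<Rightarrow> 'x set) \<Rightarrow> 'x \<Rightarrow> ('g \<Rightarrow> 'x) \<Rightarrow> bool" where
  "gdecomp A Ag x c \<longleftrightarrow> (\<forall>g. c g \<in> Ag g) \<and> finite {g. c g \<noteq> \<zero>\<^bsub>A\<^esub>}
      \<and> x = finsum A c {g. c g \<noteq> \<zero>\<^bsub>A\<^esub>}"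

definition gcomp :: "('x, 'e) ring_scheme \<Rightarrow> ('g \<Rightarrow> 'x set) \<Rightarrow> 'x \<Rightarrow> 'g \<Rightarrow> 'x" where
  "gcomp A Ag x = (THE c. gdecomp A Ag x c)"

definition hom_elems :: "('g \<Rightarrow> 'x set) \<Rightarrow> 'x set" where
  "hom_elems Ag = (\<Union>g. Ag g)"

definition direct_sum_grading :: "('x, 'e) ring_scheme \<Rightarrow> ('g \<Rightarrow> 'x set) \<Rightarrow> bool" where
  "direct_sum_grading A Ag \<longleftrightarrow> (\<forall>g. additive_subgroup (Ag g) A)
      \<and> (\<forall>x \<in> carrier A. \<exists>!c. gdecomp A Ag x c)"

definition graded_ring :: "('a, 'c) ring_scheme \<Rightarrow> ('g::group_add \<Rightarrow> 'a set) \<Rightarrow> bool" where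
  "graded_ring R Rg \<longleftrightarrow> cring R \<and> direct_sum_grading R Rg
      \<and> (\<forall>g h. \<forall>a \<in> Rg g. \<forall>b \<in> Rg h. a \<otimes>\<^bsub>R\<^esub> b \<in> Rg (g + h))"

definition graded_module ::
  "('a, 'c) ring_scheme \<Rightarrow> ('g::group_add \<Rightarrow> 'a set) \<Rightarrow> ('a, 'b) module \<Rightarrow> ('g \<Rightarrow> 'b set) \<Rightarrow> bool" where
  "graded_module R Rg M Mg \<longleftrightarrow> graded_ring R Rg \<and> module R M \<and> direct_sum_grading M Mg
      \<and> (\<forall>g h. \<forall>a \<in> Rg g. \<forall>m \<in> Mg h. a \<odot>\<^bsub>M\<^esub> m \<in> Mg (g + h))"

definition graded_ideal :: "('a, 'c) ring_scheme \<Rightarrow> ('g \<Rightarrow> 'a set) \<Rightarrow> 'a set \<Rightarrow> bool" where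
  "graded_ideal R Rg I \<longleftrightarrow> ideal I R \<and> (\<forall>x \<in> I. \<forall>g. gcomp R Rg x g \<in> I)"

definition graded_radical :: "('a, 'c) ring_scheme \<Rightarrow> ('g \<Rightarrow> 'a set) \<Rightarrow> 'a set \<Rightarrow> 'a set" where
  "graded_radical R Rg I = {x \<in> carrier R. \<forall>g. \<exists>n::nat. n > 0 \<and> gcomp R Rg x g [^]\<^bsub>R\<^esub> n \<in> I}"

definition graded_prime_ideal :: "('a, 'c) ring_scheme \<Rightarrow> ('g \<Rightarrow> 'a set) \<Rightarrow> 'a set \<Rightarrow> bool" where
  "graded_prime_ideal R Rg p \<longleftrightarrow> graded_ideal R Rg p \<and> p \<noteq> carrier R
      \<and> (\<forall>a \<in> hom_elems Rg. \<forall>b \<in> hom_elems Rg. a \<otimes>\<^bsub>R\<^esub> b \<in> p \<longrightarrow> a \<in> p \<or> b \<in> p)"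

definition graded_qp_ideal :: "('a, 'c) ring_scheme \<Rightarrow> ('g \<Rightarrow> 'a set) \<Rightarrow> 'a set \<Rightarrow> bool" where
  "graded_qp_ideal R Rg q \<longleftrightarrow> graded_ideal R Rg q \<and> q \<noteq> carrier R
      \<and> (\<forall>a \<in> hom_elems Rg. \<forall>b \<in> hom_elems Rg. a \<otimes>\<^bsub>R\<^esub> b \<in> q \<longrightarrow>
            a \<in> graded_radical R Rg q \<or> b \<in> graded_radical R Rg q)"

definition qp_spec_ring :: "('a, 'c) ring_scheme \<Rightarrow> ('g \<Rightarrow> 'a set) \<Rightarrow> 'a set set" where
  "qp_spec_ring R Rg = {q. graded_qp_ideal R Rg q}"

definition graded_submodule ::
  "('a, 'c) ring_scheme \<Rightarrow> ('a, 'b) module \<Rightarrow> ('g \<Rightarrow> 'b set) \<Rightarrow> 'b set \<Rightarrow> bool" where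
  "graded_submodule R M Mg N \<longleftrightarrow> submodule N R M \<and> (\<forall>x \<in> N. \<forall>g. gcomp M Mg x g \<in> N)"

definition colon :: "('a, 'c) ring_scheme \<Rightarrow> ('a, 'b) module \<Rightarrow> 'b set \<Rightarrow> 'a set" where
  "colon R M K = {r \<in> carrier R. \<forall>m \<in> carrier M. r \<odot>\<^bsub>M\<^esub> m \<in> K}"

definition Ann :: "('a, 'c) ring_scheme \<Rightarrow> ('a, 'b) module \<Rightarrow> 'a set" where
  "Ann R M = colon R M {\<zero>\<^bsub>M\<^esub>}"

definition graded_prime_submodule ::
  "('a, 'c) ring_scheme \<Rightarrow> ('g \<Rightarrow> 'a set) \<Rightarrow> ('a, 'b) module \<Rightarrow> ('g \<Rightarrow> 'b set) \<Rightarrow> 'b set \<Rightarrow> bool" where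
  "graded_prime_submodule R Rg M Mg P \<longleftrightarrow> graded_submodule R M Mg P \<and> P \<noteq> carrier M
      \<and> (\<forall>r \<in> hom_elems Rg. \<forall>m \<in> hom_elems Mg. r \<odot>\<^bsub>M\<^esub> m \<in> P \<longrightarrow> m \<in> P \<or> r \<in> colon R M P)"

text \<open>Gr_M(K): intersection of graded prime submodules containing K (M if there are none).\<close>
definition graded_mradical ::
  "('a, 'c) ring_scheme \<Rightarrow> ('g \<Rightarrow> 'a set) \<Rightarrow> ('a, 'b) module \<Rightarrow> ('g \<Rightarrow> 'b set) \<Rightarrow> 'b set \<Rightarrow> 'b set" where
  "graded_mradical R Rg M Mg K =
     carrier M \<inter> \<Inter>{P. graded_prime_submodule R Rg M Mg P \<and> K \<subseteq> P}"

definition graded_primeful ::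
  "('a, 'c) ring_scheme \<Rightarrow> ('g \<Rightarrow> 'a set) \<Rightarrow> ('a, 'b) module \<Rightarrow> ('g \<Rightarrow> 'b set) \<Rightarrow> 'b set \<Rightarrow> bool" where
  "graded_primeful R Rg M Mg K \<longleftrightarrow>
     (\<forall>p. graded_prime_ideal R Rg p \<and> colon R M K \<subseteq> p \<longrightarrow>
        (\<exists>P. graded_prime_submodule R Rg M Mg P \<and> K \<subseteq> P \<and> colon R M P = p))"

definition graded_qp_submodule ::
  "('a, 'c) ring_scheme \<Rightarrow> ('g \<Rightarrow> 'a set) \<Rightarrow> ('a, 'b) module \<Rightarrow> ('g \<Rightarrow> 'b set) \<Rightarrow> 'b set \<Rightarrow> bool" where
  "graded_qp_submodule R Rg M Mg Q \<longleftrightarrow> graded_submodule R M Mg Q \<and> Q \<noteq> carrier M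
      \<and> (\<forall>r \<in> hom_elems Rg. \<forall>m \<in> hom_elems Mg. r \<odot>\<^bsub>M\<^esub> m \<in> Q \<longrightarrow>
            r \<in> graded_radical R Rg (colon R M Q) \<or> m \<in> graded_mradical R Rg M Mg Q)"

definition qp_spec ::
  "('a, 'c) ring_scheme \<Rightarrow> ('g \<Rightarrow> 'a set) \<Rightarrow> ('a, 'b) module \<Rightarrow> ('g \<Rightarrow> 'b set) \<Rightarrow> 'b set set" where
  "qp_spec R Rg M Mg = {Q. graded_qp_submodule R Rg M Mg Q \<and> graded_primeful R Rg M Mg Q}"

definition qp_V ::
  "('a, 'c) ring_scheme \<Rightarrow> ('g \<Rightarrow> 'a set) \<Rightarrow> ('a, 'b) module \<Rightarrow> ('g \<Rightarrow> 'b set) \<Rightarrow> 'b set \<Rightarrow> 'b set set" where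
  "qp_V R Rg M Mg K = {Q \<in> qp_spec R Rg M Mg.
      graded_radical R Rg (colon R M K) \<subseteq> graded_radical R Rg (colon R M Q)}"

definition qz_open ::
  "('a, 'c) ring_scheme \<Rightarrow> ('g \<Rightarrow> 'a set) \<Rightarrow> ('a, 'b) module \<Rightarrow> ('g \<Rightarrow> 'b set) \<Rightarrow> 'b set set \<Rightarrow> bool" where
  "qz_open R Rg M Mg U \<longleftrightarrow>
     (\<exists>K. graded_submodule R M Mg K \<and> U = qp_spec R Rg M Mg - qp_V R Rg M Mg K)"

definition qz_quasi_compact ::
  "('a, 'c) ring_scheme \<Rightarrow> ('g \<Rightarrow> 'a set) \<Rightarrow> ('a, 'b) module \<Rightarrow> ('g \<Rightarrow> 'b set) \<Rightarrow> 'b set set \<Rightarrow> bool" where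
  "qz_quasi_compact R Rg M Mg S \<longleftrightarrow>
     (\<forall>\<U>. (\<forall>U \<in> \<U>. qz_open R Rg M Mg U) \<and> S \<subseteq> \<Union>\<U> \<longrightarrow>
        (\<exists>\<F> \<subseteq> \<U>. finite \<F> \<and> S \<subseteq> \<Union>\<F>))"

definition scal_sub :: "('a, 'b) module \<Rightarrow> 'a \<Rightarrow> 'b set" where
  "scal_sub M r = {r \<odot>\<^bsub>M\<^esub> m | m. m \<in> carrier M}"

definition GX ::
  "('a, 'c) ring_scheme \<Rightarrow> ('g \<Rightarrow> 'a set) \<Rightarrow> ('a, 'b) module \<Rightarrow> ('g \<Rightarrow> 'b set) \<Rightarrow> 'a \<Rightarrow> 'b set set" where
  "GX R Rg M Mg r = qp_spec R Rg M Mg - qp_V R Rg M Mg (scal_sub M r)"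

definition Rbar :: "('a, 'c) ring_scheme \<Rightarrow> ('a, 'b) module \<Rightarrow> 'a set ring" where
  "Rbar R M = R Quot (Ann R M)"

definition Rbar_grading ::
  "('a, 'c) ring_scheme \<Rightarrow> ('g \<Rightarrow> 'a set) \<Rightarrow> ('a, 'b) module \<Rightarrow> 'g \<Rightarrow> 'a set set" where
  "Rbar_grading R Rg M g = (\<lambda>a. Ann R M +>\<^bsub>R\<^esub> a) ` Rg g"

definition psi_q :: "('a, 'c) ring_scheme \<Rightarrow> ('a, 'b) module \<Rightarrow> 'b set \<Rightarrow> 'a set set" where
  "psi_q R M Q = (\<lambda>a. Ann R M +>\<^bsub>R\<^esub> a) ` colon R M Q"

end

theory Submission
  imports Defs
begin

lemma (in abelian_monoid) finsum_in_subgroup: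
  assumes "additive_subgroup H G" "finite S" "\<And>i. i \<in> S \<Longrightarrow> f i \<in> H"
  shows "finsum G f S \<in> H"
  using assms(2,3)
proof (induct S rule: finite_induct)
  case empty
  then show ?case using additive_subgroup.zero_closed[OF assms(1)] by simp
next
  case (insert x F)
  have sub: "H \<subseteq> carrier G" using additive_subgroup.a_subset[OF assms(1)] .
  have "f \<in> F \<rightarrow> carrier G" "f x \<in> carrier G" using insert sub by auto
  then have "finsum G f (insert x F) = f x \<oplus> finsum G f F"
    using insert by (simp add: finsum_insert)
  then show ?case using insert additive_subgroup.a_closed[OF assms(1)] by auto
qed

context abelian_group
begin

lemma gdecompI:
  assumes "\<And>g. c g \<in> Ag g" "\<And>g. Ag g \<subseteq> carrier G" "finite S" "\<And>g. g \<notin> S \<Longrightarrow> c g = \<zero>"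
    "x = finsum G c S"
  shows "gdecomp G Ag x c"
proof -
  have sub: "{g. c g \<noteq> \<zero>} \<subseteq> S" using assms(4) by auto
  have fin: "finite {g. c g \<noteq> \<zero>}" using finite_subset[OF sub assms(3)] .
  have "finsum G c {g. c g \<noteq> \<zero>} = finsum G c S"
    by (rule add.finprod_mono_neutral_cong_left) (use assms sub in auto)
  then show ?thesis unfolding gdecomp_def using assms fin by auto
qed

lemma gdecompD:
  assumes "gdecomp G Ag x c" "\<And>g. Ag g \<subseteq> carrier G" "finite S" "{g. c g \<noteq> \<zero>} \<subseteq> S"
  shows "x = finsum G c S"
proof -
  have "finsum G c {g. c g \<noteq> \<zero>} = finsum G c S"
    by (rule add.finprod_mono_neutral_cong_left) (use assms in \<open>auto simp: gdecomp_def\<close>)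
  then show ?thesis using assms(1) unfolding gdecomp_def by auto
qed

lemma gcomp_eq:
  assumes "direct_sum_grading G Ag" "x \<in> carrier G" "gdecomp G Ag x c"
  shows "gcomp G Ag x = c"
proof -
  have "\<exists>!c. gdecomp G Ag x c" using assms(1,2) unfolding direct_sum_grading_def by simp
  then show ?thesis unfolding gcomp_def using assms(3) by (metis the1_equality)
qed

lemma gcomp_decomp:
  assumes "direct_sum_grading G Ag" "x \<in> carrier G"
  shows "gdecomp G Ag x (gcomp G Ag x)"
proof -
  have "\<exists>!c. gdecomp G Ag x c" using assms(1,2) unfolding direct_sum_grading_def by simp
  then show ?thesis unfolding gcomp_def by (rule theI')
qed

lemma grading_subgroup:
  assumes "direct_sum_grading G Ag"
  shows "additive_subgroup (Ag g) G"
  using assms unfolding direct_sum_grading_def by simp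

lemma grading_sub:
  assumes "direct_sum_grading G Ag"
  shows "Ag g \<subseteq> carrier G"
  using additive_subgroup.a_subset[OF grading_subgroup[OF assms]] .

lemma grading_zero:
  assumes "direct_sum_grading G Ag"
  shows "\<zero> \<in> Ag g"
  using additive_subgroup.zero_closed[OF grading_subgroup[OF assms]] .

lemma gcomp_in:
  assumes "direct_sum_grading G Ag" "x \<in> carrier G"
  shows "gcomp G Ag x g \<in> Ag g"
  using gcomp_decomp[OF assms] unfolding gdecomp_def by auto

lemma gcomp_carrier:
  assumes "direct_sum_grading G Ag" "x \<in> carrier G"
  shows "gcomp G Ag x g \<in> carrier G"
  using gcomp_in[OF assms] grading_sub[OF assms(1)] by auto

lemma gcomp_fin:
  assumes "direct_sum_grading G Ag" "x \<in> carrier G"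
  shows "finite {g. gcomp G Ag x g \<noteq> \<zero>}"
  using gcomp_decomp[OF assms] unfolding gdecomp_def by auto

lemma gcomp_sum:
  assumes "direct_sum_grading G Ag" "x \<in> carrier G" "finite S" "{g. gcomp G Ag x g \<noteq> \<zero>} \<subseteq> S"
  shows "x = finsum G (gcomp G Ag x) S"
  using gdecompD[OF gcomp_decomp[OF assms(1,2)] grading_sub[OF assms(1)] assms(3,4)] .

lemma gcomp_hom:
  assumes "direct_sum_grading G Ag" "a \<in> Ag h"
  shows "gcomp G Ag a = (\<lambda>k. if k = h then a else \<zero>)"
proof -
  have a: "a \<in> carrier G" using assms(2) grading_sub[OF assms(1)] by auto
  have z: "\<zero> \<in> Ag k" for k using grading_zero[OF assms(1)] .
  have "gdecomp G Ag a (\<lambda>k. if k = h then a else \<zero>)"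
  proof (rule gdecompI[where S="{h}"])
    show "(if k = h then a else \<zero>) \<in> Ag k" for k using assms(2) z by simp
    show "Ag g \<subseteq> carrier G" for g using grading_sub[OF assms(1)] .
    show "a = finsum G (\<lambda>k. if k = h then a else \<zero>) {h}"
      using a by (simp add: finsum_singleton)
  qed auto
  then show ?thesis by (rule gcomp_eq[OF assms(1) a])
qed

lemma gcomp_zero:
  assumes "direct_sum_grading G Ag"
  shows "gcomp G Ag \<zero> = (\<lambda>k. \<zero>)"
proof -
  have z: "\<zero> \<in> Ag k" for k using grading_zero[OF assms(1)] .
  show ?thesis using gcomp_hom[OF assms z] by auto
qed

end


locale grmod = module R M for R :: "('a, 'c) ring_scheme" (structure) and M :: "('a, 'b) module" (structure) +
  fixes Rg :: "'g::group_add \<Rightarrow> 'a set" and Mg :: "'g \<Rightarrow> 'b set"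
  assumes gm: "graded_module R Rg M Mg"
begin

lemma dsR: "direct_sum_grading R Rg" using gm unfolding graded_module_def graded_ring_def by simp
lemma dsM: "direct_sum_grading M Mg" using gm unfolding graded_module_def by simp
lemma mulR: "a \<in> Rg g \<Longrightarrow> b \<in> Rg h \<Longrightarrow> a \<otimes> b \<in> Rg (g + h)"
  using gm unfolding graded_module_def graded_ring_def by blast
lemma smulM: "a \<in> Rg g \<Longrightarrow> m \<in> Mg h \<Longrightarrow> a \<odot>\<^bsub>M\<^esub> m \<in> Mg (g + h)"
  using gm unfolding graded_module_def by blast
lemma RgC: "Rg g \<subseteq> carrier R" using R.grading_sub[OF dsR] .
lemma MgC: "Mg g \<subseteq> carrier M" using M.grading_sub[OF dsM] .

lemma finsum_smult_rdistr:
  assumes "finite S" "f \<in> S \<rightarrow> carrier R" "m \<in> carrier M"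
  shows "(finsum R f S) \<odot>\<^bsub>M\<^esub> m = finsum M (\<lambda>i. f i \<odot>\<^bsub>M\<^esub> m) S"
  using assms
proof (induct S rule: finite_induct)
  case empty then show ?case by simp
next
  case (insert x F)
  then show ?case by (simp add: Pi_def smult_l_distr M.finsum_insert)
qed

lemma shiftR:
  assumes a: "a \<in> Rg h" and x: "x \<in> carrier R"
  shows "gdecomp R Rg (x \<otimes> a) (\<lambda>k. gcomp R Rg x (k - h) \<otimes> a)"
proof -
  define c where "c = gcomp R Rg x"
  define S where "S = {g. c g \<noteq> \<zero>}"
  have finS: "finite S" unfolding S_def c_def using R.gcomp_fin[OF dsR x] .
  have cC: "c g \<in> carrier R" for g unfolding c_def using R.gcomp_carrier[OF dsR x] .
  have aC: "a \<in> carrier R" using a RgC by auto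
  have inj: "inj_on (\<lambda>g. g + h) S" by (auto simp: inj_on_def)
  have "x = finsum R c S" unfolding c_def S_def using R.gcomp_sum[OF dsR x] R.gcomp_fin[OF dsR x] by auto
  then have "x \<otimes> a = finsum R (\<lambda>g. c g \<otimes> a) S"
    using finsum_ldistr[OF finS aC] cC by auto
  also have "\<dots> = finsum R (\<lambda>k. c (k - h) \<otimes> a) ((\<lambda>g. g + h) ` S)"
    by (subst R.finsum_reindex[OF _ inj]) (auto simp: cC aC)
  finally have eq: "x \<otimes> a = finsum R (\<lambda>k. c (k - h) \<otimes> a) ((\<lambda>g. g + h) ` S)" .
  show ?thesis unfolding c_def[symmetric]
  proof (rule R.gdecompI[OF _ _ _ _ eq])
    show "c (k - h) \<otimes> a \<in> Rg k" for k
      using mulR[OF R.gcomp_in[OF dsR x] a, of "k - h"] unfolding c_def by simp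
    show "Rg g \<subseteq> carrier R" for g using RgC .
    show "finite ((\<lambda>g. g + h) ` S)" using finS by simp
    show "c (k - h) \<otimes> a = \<zero>" if "k \<notin> (\<lambda>g. g + h) ` S" for k
    proof -
      have "k - h \<notin> S" using that by (metis diff_add_cancel image_eqI)
      then show ?thesis unfolding S_def using aC by auto
    qed
  qed
qed

lemma shiftM1:
  assumes m: "m \<in> Mg h" and x: "x \<in> carrier R"
  shows "gdecomp M Mg (x \<odot>\<^bsub>M\<^esub> m) (\<lambda>k. gcomp R Rg x (k - h) \<odot>\<^bsub>M\<^esub> m)"
proof -
  define c where "c = gcomp R Rg x"
  define S where "S = {g. c g \<noteq> \<zero>}"
  have finS: "finite S" unfolding S_def c_def using R.gcomp_fin[OF dsR x] .
  have cC: "c g \<in> carrier R" for g unfolding c_def using R.gcomp_carrier[OF dsR x] .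
  have mC: "m \<in> carrier M" using m MgC by auto
  have inj: "inj_on (\<lambda>g. g + h) S" by (auto simp: inj_on_def)
  have "x = finsum R c S" unfolding c_def S_def using R.gcomp_sum[OF dsR x] R.gcomp_fin[OF dsR x] by auto
  then have "x \<odot>\<^bsub>M\<^esub> m = finsum M (\<lambda>g. c g \<odot>\<^bsub>M\<^esub> m) S"
    using finsum_smult_rdistr[OF finS _ mC] cC by auto
  also have "\<dots> = finsum M (\<lambda>k. c (k - h) \<odot>\<^bsub>M\<^esub> m) ((\<lambda>g. g + h) ` S)"
    by (subst M.finsum_reindex[OF _ inj]) (auto simp: cC mC)
  finally have eq: "x \<odot>\<^bsub>M\<^esub> m = finsum M (\<lambda>k. c (k - h) \<odot>\<^bsub>M\<^esub> m) ((\<lambda>g. g + h) ` S)" .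
  show ?thesis unfolding c_def[symmetric]
  proof (rule M.gdecompI[OF _ _ _ _ eq])
    show "c (k - h) \<odot>\<^bsub>M\<^esub> m \<in> Mg k" for k
      using smulM[OF R.gcomp_in[OF dsR x] m, of "k - h"] unfolding c_def by simp
    show "Mg g \<subseteq> carrier M" for g using MgC .
    show "finite ((\<lambda>g. g + h) ` S)" using finS by simp
    show "c (k - h) \<odot>\<^bsub>M\<^esub> m = \<zero>\<^bsub>M\<^esub>" if "k \<notin> (\<lambda>g. g + h) ` S" for k
    proof -
      have "k - h \<notin> S" using that by (metis diff_add_cancel image_eqI)
      then show ?thesis unfolding S_def using mC by auto
    qed
  qed
qed

lemma shiftM2:
  assumes r: "r \<in> Rg d" and m: "m \<in> carrier M"
  shows "gdecomp M Mg (r \<odot>\<^bsub>M\<^esub> m) (\<lambda>k. r \<odot>\<^bsub>M\<^esub> gcomp M Mg m (- d + k))"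
proof -
  define c where "c = gcomp M Mg m"
  define S where "S = {g. c g \<noteq> \<zero>\<^bsub>M\<^esub>}"
  have finS: "finite S" unfolding S_def c_def using M.gcomp_fin[OF dsM m] .
  have cC: "c g \<in> carrier M" for g unfolding c_def using M.gcomp_carrier[OF dsM m] .
  have rC: "r \<in> carrier R" using r RgC by auto
  have inj: "inj_on (\<lambda>g. d + g) S" by (auto simp: inj_on_def)
  have "m = finsum M c S" unfolding c_def S_def using M.gcomp_sum[OF dsM m] M.gcomp_fin[OF dsM m] by auto
  then have "r \<odot>\<^bsub>M\<^esub> m = finsum M (\<lambda>g. r \<odot>\<^bsub>M\<^esub> c g) S"
    using finsum_smult_ldistr[OF finS rC] cC by auto
  also have "\<dots> = finsum M (\<lambda>k. r \<odot>\<^bsub>M\<^esub> c (- d + k)) ((\<lambda>g. d + g) ` S)"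
    by (subst M.finsum_reindex[OF _ inj]) (auto simp: cC rC minus_add_cancel)
  finally have eq: "r \<odot>\<^bsub>M\<^esub> m = finsum M (\<lambda>k. r \<odot>\<^bsub>M\<^esub> c (- d + k)) ((\<lambda>g. d + g) ` S)" .
  show ?thesis unfolding c_def[symmetric]
  proof (rule M.gdecompI[OF _ _ _ _ eq])
    show "r \<odot>\<^bsub>M\<^esub> c (- d + k) \<in> Mg k" for k
      using smulM[OF r M.gcomp_in[OF dsM m], of "- d + k"] unfolding c_def by (simp only: add_minus_cancel)
    show "Mg g \<subseteq> carrier M" for g using MgC .
    show "finite ((\<lambda>g. d + g) ` S)" using finS by simp
    show "r \<odot>\<^bsub>M\<^esub> c (- d + k) = \<zero>\<^bsub>M\<^esub>" if "k \<notin> (\<lambda>g. d + g) ` S" for k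
    proof -
      have "- d + k \<notin> S" using that by (metis add_minus_cancel image_eqI)
      then show ?thesis unfolding S_def using rC by auto
    qed
  qed
qed

end


lemma (in cring) ideal_intro:
  assumes "I \<subseteq> carrier R" "\<zero> \<in> I" "\<And>a b. a \<in> I \<Longrightarrow> b \<in> I \<Longrightarrow> a \<oplus> b \<in> I"
    "\<And>a. a \<in> I \<Longrightarrow> \<ominus> a \<in> I" "\<And>a x. a \<in> I \<Longrightarrow> x \<in> carrier R \<Longrightarrow> x \<otimes> a \<in> I"
  shows "ideal I R"
proof (rule idealI)
  show "ring R" by (rule ring_axioms)
  show "subgroup I (add_monoid R)"
    apply (rule add.subgroupI)
    using assms by (auto simp: a_inv_def[symmetric])
  show "x \<otimes> a \<in> I" if "a \<in> I" "x \<in> carrier R" for a x using assms that by auto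
  show "a \<otimes> x \<in> I" if "a \<in> I" "x \<in> carrier R" for a x
    using assms(5)[OF that] that assms(1) m_comm by auto
qed

context grmod
begin

lemma hom_iff: "x \<in> hom_elems Rg \<longleftrightarrow> (\<exists>g. x \<in> Rg g)"
  unfolding hom_elems_def by auto

lemma one_hom: "\<one> \<in> Rg 0"
proof -
  define e where "e = gcomp R Rg \<one>"
  have eC: "e k \<in> carrier R" for k unfolding e_def using R.gcomp_carrier[OF dsR] by simp
  have eR: "e k \<in> Rg k" for k unfolding e_def using R.gcomp_in[OF dsR] by simp
  have kill: "e g \<otimes> a = \<zero>" if "g \<noteq> 0" "a \<in> Rg h" for g a h
  proof -
    have aC: "a \<in> carrier R" using that RgC by auto
    have "gdecomp R Rg (\<one> \<otimes> a) (\<lambda>k. e (k - h) \<otimes> a)"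
      unfolding e_def using shiftR[OF that(2)] by simp
    then have "gdecomp R Rg a (\<lambda>k. e (k - h) \<otimes> a)" using aC by simp
    then have "gcomp R Rg a = (\<lambda>k. e (k - h) \<otimes> a)" using R.gcomp_eq[OF dsR aC] by simp
    then have "(\<lambda>k. if k = h then a else \<zero>) = (\<lambda>k. e (k - h) \<otimes> a)"
      using R.gcomp_hom[OF dsR that(2)] by simp
    then have "(if g + h = h then a else \<zero>) = e (g + h - h) \<otimes> a" by meson
    moreover have "g + h \<noteq> h" using that(1) by (metis add.left_neutral add_right_cancel)
    ultimately show ?thesis by simp
  qed
  define S where "S = {g. e g \<noteq> \<zero>}"
  have finS: "finite S" unfolding S_def e_def using R.gcomp_fin[OF dsR] by simp
  have one_sum: "\<one> = finsum R e S" unfolding S_def e_def using R.gcomp_sum[OF dsR] R.gcomp_fin[OF dsR] by simp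
  have z: "e g = \<zero>" if "g \<noteq> 0" for g
  proof -
    have "e g = e g \<otimes> \<one>" using eC by simp
    also have "\<dots> = finsum R (\<lambda>k. e g \<otimes> e k) S"
      using one_sum finsum_rdistr[OF finS eC[of g]] eC by simp
    also have "\<dots> = finsum R (\<lambda>k. \<zero>) S"
      by (rule R.finsum_cong') (auto simp: kill[OF that eR])
    also have "\<dots> = \<zero>" by simp
    finally show ?thesis .
  qed
  have "\<one> = finsum R e {0}"
    using R.gcomp_sum[OF dsR, of \<one> "{0}"] z unfolding e_def by auto
  also have "\<dots> = e 0" using eC by (simp add: R.finsum_singleton)
  finally show ?thesis using eR by simp
qed

lemma pow_hom:
  assumes "r \<in> Rg d" shows "\<exists>g. r [^] (n::nat) \<in> Rg g"
proof (induct n)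
  case 0 then show ?case using one_hom by auto
next
  case (Suc n)
  then obtain g where "r [^] n \<in> Rg g" by auto
  then have "r [^] n \<otimes> r \<in> Rg (g + d)" using mulR assms by blast
  then show ?case by auto
qed

lemma pow_hom': "r \<in> hom_elems Rg \<Longrightarrow> r [^] (n::nat) \<in> hom_elems Rg"
  using pow_hom hom_iff by meson

lemma rad_hom:
  assumes r: "r \<in> Rg d" and I: "ideal I R"
  shows "r \<in> graded_radical R Rg I \<longleftrightarrow> (\<exists>n::nat. n > 0 \<and> r [^] n \<in> I)"
proof
  assume "r \<in> graded_radical R Rg I"
  then obtain n::nat where "n > 0" "gcomp R Rg r d [^] n \<in> I" unfolding graded_radical_def by blast
  then show "\<exists>n::nat. n > 0 \<and> r [^] n \<in> I" using R.gcomp_hom[OF dsR r] by auto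
next
  assume h: "\<exists>n::nat. n > 0 \<and> r [^] n \<in> I"
  have rC: "r \<in> carrier R" using r RgC by auto
  have z: "\<zero> \<in> I" using additive_subgroup.zero_closed[OF ideal.axioms(1)[OF I]] .
  have "\<exists>n::nat. n > 0 \<and> gcomp R Rg r g [^] n \<in> I" for g
  proof (cases "g = d")
    case True then show ?thesis using h R.gcomp_hom[OF dsR r] by auto
  next
    case False
    have "gcomp R Rg r g [^] (1::nat) = \<zero>" using R.gcomp_hom[OF dsR r] False by simp
    then show ?thesis using z by (metis zero_less_one)
  qed
  then show "r \<in> graded_radical R Rg I" unfolding graded_radical_def using rC by blast
qed

lemma pow_in_prime:
  assumes p: "graded_prime_ideal R Rg p" and a: "a \<in> hom_elems Rg" and n: "a [^] (n::nat) \<in> p"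
  shows "a \<in> p"
  using n
proof (induct n)
  case 0
  have I: "ideal p R" using p unfolding graded_prime_ideal_def graded_ideal_def by simp
  have aC: "a \<in> carrier R" using a RgC hom_iff by auto
  have "a \<otimes> \<one> \<in> p" using ideal.I_l_closed[OF I _ aC, of \<one>] 0 by simp
  then show ?case using aC by simp
next
  case (Suc n)
  have "a [^] n \<otimes> a \<in> p" using Suc by simp
  then have "a [^] n \<in> p \<or> a \<in> p"
    using p pow_hom'[OF a] a unfolding graded_prime_ideal_def by blast
  then show ?case using Suc by blast
qed

lemma graded_ideal_sum:
  assumes I: "graded_ideal R Rg I" and x: "x \<in> carrier R" and c: "\<And>g. gcomp R Rg x g \<in> I"
  shows "x \<in> I"
proof -
  have Is: "additive_subgroup I R" using I unfolding graded_ideal_def using ideal.axioms(1) by blast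
  have "x = finsum R (gcomp R Rg x) {g. gcomp R Rg x g \<noteq> \<zero>}"
    using R.gcomp_sum[OF dsR x] R.gcomp_fin[OF dsR x] by simp
  also have "\<dots> \<in> I" by (rule R.finsum_in_subgroup[OF Is R.gcomp_fin[OF dsR x]]) (use c in auto)
  finally show ?thesis .
qed

lemma rad_sub_prime:
  assumes p: "graded_prime_ideal R Rg p" and sub: "I \<subseteq> p"
  shows "graded_radical R Rg I \<subseteq> p"
proof
  fix x assume x: "x \<in> graded_radical R Rg I"
  have xC: "x \<in> carrier R" using x unfolding graded_radical_def by simp
  have "gcomp R Rg x g \<in> p" for g
  proof -
    obtain n::nat where "gcomp R Rg x g [^] n \<in> I" using x unfolding graded_radical_def by blast
    then have "gcomp R Rg x g [^] n \<in> p" using sub by auto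
    moreover have "gcomp R Rg x g \<in> hom_elems Rg" using R.gcomp_in[OF dsR xC] hom_iff by auto
    ultimately show ?thesis using pow_in_prime[OF p] by blast
  qed
  then show "x \<in> p" using graded_ideal_sum[OF _ xC] p unfolding graded_prime_ideal_def by blast
qed

lemma ideal_sub_rad:
  assumes I: "graded_ideal R Rg I"
  shows "I \<subseteq> graded_radical R Rg I"
proof
  fix x assume x: "x \<in> I"
  have Iid: "ideal I R" using I unfolding graded_ideal_def by simp
  have xC: "x \<in> carrier R" using additive_subgroup.a_subset[OF ideal.axioms(1)[OF Iid]] x by auto
  have c: "gcomp R Rg x g \<in> I" for g using I x unfolding graded_ideal_def by simp
  have "gcomp R Rg x g [^] (1::nat) \<in> I" for g
    using c[of g] R.gcomp_carrier[OF dsR xC, of g] by simp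
  then have "\<forall>g. \<exists>n::nat. n > 0 \<and> gcomp R Rg x g [^] n \<in> I" by (meson zero_less_one)
  then show "x \<in> graded_radical R Rg I" unfolding graded_radical_def using xC by simp
qed

lemma rad_mono: "I \<subseteq> J \<Longrightarrow> graded_radical R Rg I \<subseteq> graded_radical R Rg J"
  unfolding graded_radical_def by blast

lemma prime_rad:
  assumes p: "graded_prime_ideal R Rg p"
  shows "graded_radical R Rg p = p"
  using rad_sub_prime[OF p] ideal_sub_rad p unfolding graded_prime_ideal_def by blast

end


context grmod
begin

lemma idealD:
  assumes "ideal I R"
  shows "I \<subseteq> carrier R" "\<zero> \<in> I" "\<And>a b. a \<in> I \<Longrightarrow> b \<in> I \<Longrightarrow> a \<oplus> b \<in> I"
    "\<And>a. a \<in> I \<Longrightarrow> \<ominus> a \<in> I" "\<And>a x. a \<in> I \<Longrightarrow> x \<in> carrier R \<Longrightarrow> x \<otimes> a \<in> I"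
    "\<And>a x. a \<in> I \<Longrightarrow> x \<in> carrier R \<Longrightarrow> a \<otimes> x \<in> I"
    "additive_subgroup I R"
  using additive_subgroup.a_subset[OF ideal.axioms(1)[OF assms]]
    additive_subgroup.zero_closed[OF ideal.axioms(1)[OF assms]]
    additive_subgroup.a_closed[OF ideal.axioms(1)[OF assms]]
    additive_subgroup.a_inv_closed[OF ideal.axioms(1)[OF assms]]
    ideal.I_l_closed[OF assms] ideal.I_r_closed[OF assms] ideal.axioms(1)[OF assms]
  by auto

lemma subD:
  assumes "submodule K R M"
  shows "K \<subseteq> carrier M" "\<zero>\<^bsub>M\<^esub> \<in> K" "\<And>a b. a \<in> K \<Longrightarrow> b \<in> K \<Longrightarrow> a \<oplus>\<^bsub>M\<^esub> b \<in> K"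
    "\<And>a. a \<in> K \<Longrightarrow> \<ominus>\<^bsub>M\<^esub> a \<in> K" "\<And>a x. a \<in> K \<Longrightarrow> x \<in> carrier R \<Longrightarrow> x \<odot>\<^bsub>M\<^esub> a \<in> K"
    "additive_subgroup K M"
proof -
  have as: "additive_subgroup K M" by (rule additive_subgroupI[OF submodule.axioms(1)[OF assms]])
  show "K \<subseteq> carrier M" "\<zero>\<^bsub>M\<^esub> \<in> K" "\<And>a b. a \<in> K \<Longrightarrow> b \<in> K \<Longrightarrow> a \<oplus>\<^bsub>M\<^esub> b \<in> K"
    "\<And>a. a \<in> K \<Longrightarrow> \<ominus>\<^bsub>M\<^esub> a \<in> K" "additive_subgroup K M"
    using additive_subgroup.a_subset[OF as] additive_subgroup.zero_closed[OF as]
      additive_subgroup.a_closed[OF as] additive_subgroup.a_inv_closed[OF as] as by auto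
  show "\<And>a x. a \<in> K \<Longrightarrow> x \<in> carrier R \<Longrightarrow> x \<odot>\<^bsub>M\<^esub> a \<in> K"
    using submodule.smult_closed[OF assms] by blast
qed

lemma colon_ideal:
  assumes K: "submodule K R M"
  shows "ideal (colon R M K) R"
proof (rule R.ideal_intro)
  show "colon R M K \<subseteq> carrier R" unfolding colon_def by auto
  show "\<zero> \<in> colon R M K" unfolding colon_def using subD(2)[OF K] by auto
  show "a \<oplus> b \<in> colon R M K" if "a \<in> colon R M K" "b \<in> colon R M K" for a b
    using that subD(3)[OF K] unfolding colon_def by (auto simp: smult_l_distr)
  show "\<ominus> a \<in> colon R M K" if "a \<in> colon R M K" for a
    using that subD(4)[OF K] unfolding colon_def by (auto simp: smult_l_minus)
  show "x \<otimes> a \<in> colon R M K" if "a \<in> colon R M K" "x \<in> carrier R" for a x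
    using that subD(5)[OF K] unfolding colon_def by (auto simp: smult_assoc1)
qed

lemma colon_graded:
  assumes K: "graded_submodule R M Mg K"
  shows "graded_ideal R Rg (colon R M K)"
proof -
  have Ks: "submodule K R M" using K unfolding graded_submodule_def by simp
  have Kg: "\<And>y g. y \<in> K \<Longrightarrow> gcomp M Mg y g \<in> K" using K unfolding graded_submodule_def by simp
  have "gcomp R Rg x g \<in> colon R M K" if x: "x \<in> colon R M K" for x g
  proof -
    have xC: "x \<in> carrier R" using x unfolding colon_def by simp
    have cC: "gcomp R Rg x g \<in> carrier R" using R.gcomp_carrier[OF dsR xC] .
    have "gcomp R Rg x g \<odot>\<^bsub>M\<^esub> m \<in> K" if m: "m \<in> carrier M" for m
    proof -
      define S where "S = {h. gcomp M Mg m h \<noteq> \<zero>\<^bsub>M\<^esub>}"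
      have finS: "finite S" unfolding S_def using M.gcomp_fin[OF dsM m] .
      have mcC: "gcomp M Mg m h \<in> carrier M" for h using M.gcomp_carrier[OF dsM m] .
      have "m = finsum M (gcomp M Mg m) S" unfolding S_def using M.gcomp_sum[OF dsM m] finS S_def by simp
      then have "gcomp R Rg x g \<odot>\<^bsub>M\<^esub> m = gcomp R Rg x g \<odot>\<^bsub>M\<^esub> finsum M (gcomp M Mg m) S"
        by (rule arg_cong[where f="\<lambda>z. gcomp R Rg x g \<odot>\<^bsub>M\<^esub> z"])
      also have "\<dots> = finsum M (\<lambda>h. gcomp R Rg x g \<odot>\<^bsub>M\<^esub> gcomp M Mg m h) S"
        by (rule finsum_smult_ldistr[OF finS cC]) (use mcC in auto)
      also have "\<dots> \<in> K"
      proof (rule M.finsum_in_subgroup[OF subD(6)[OF Ks] finS])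
        fix h
        define mh where "mh = gcomp M Mg m h"
        have mh: "mh \<in> Mg h" unfolding mh_def using M.gcomp_in[OF dsM m] .
        have mhC: "mh \<in> carrier M" using mh MgC by auto
        have "x \<odot>\<^bsub>M\<^esub> mh \<in> K" using x mhC unfolding colon_def by simp
        then have in1: "gcomp M Mg (x \<odot>\<^bsub>M\<^esub> mh) (g + h) \<in> K" using Kg by blast
        have "gcomp M Mg (x \<odot>\<^bsub>M\<^esub> mh) = (\<lambda>k. gcomp R Rg x (k - h) \<odot>\<^bsub>M\<^esub> mh)"
          using M.gcomp_eq[OF dsM _ shiftM1[OF mh xC]] xC mhC by simp
        then show "gcomp R Rg x g \<odot>\<^bsub>M\<^esub> gcomp M Mg m h \<in> K" using in1 unfolding mh_def by simp
      qed
      finally show ?thesis .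
    qed
    then show ?thesis unfolding colon_def using cC by simp
  qed
  then show ?thesis unfolding graded_ideal_def using colon_ideal[OF Ks] by simp
qed

lemma colonR_graded:
  assumes p: "graded_ideal R Rg p" and c: "c \<in> Rg d"
  shows "graded_ideal R Rg {x \<in> carrier R. x \<otimes> c \<in> p}"
proof -
  have pI: "ideal p R" using p unfolding graded_ideal_def by simp
  have cC: "c \<in> carrier R" using c RgC by auto
  have I: "ideal {x \<in> carrier R. x \<otimes> c \<in> p} R"
  proof (rule R.ideal_intro)
    show "\<zero> \<in> {x \<in> carrier R. x \<otimes> c \<in> p}" using idealD(2)[OF pI] cC by simp
    show "a \<oplus> b \<in> {x \<in> carrier R. x \<otimes> c \<in> p}" if "a \<in> {x \<in> carrier R. x \<otimes> c \<in> p}" "b \<in> {x \<in> carrier R. x \<otimes> c \<in> p}" for a b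
      using that idealD(3)[OF pI] cC by (auto simp: R.l_distr)
    show "\<ominus> a \<in> {x \<in> carrier R. x \<otimes> c \<in> p}" if "a \<in> {x \<in> carrier R. x \<otimes> c \<in> p}" for a
      using that idealD(4)[OF pI] cC by (auto simp: R.l_minus)
    show "x \<otimes> a \<in> {x \<in> carrier R. x \<otimes> c \<in> p}" if "a \<in> {x \<in> carrier R. x \<otimes> c \<in> p}" "x \<in> carrier R" for a x
      using that idealD(5)[OF pI] cC by (auto simp: R.m_assoc)
  qed auto
  have "gcomp R Rg x g \<in> {x \<in> carrier R. x \<otimes> c \<in> p}" if x: "x \<in> carrier R" "x \<otimes> c \<in> p" for x g
  proof -
    have "gcomp R Rg (x \<otimes> c) = (\<lambda>k. gcomp R Rg x (k - d) \<otimes> c)"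
      using R.gcomp_eq[OF dsR _ shiftR[OF c x(1)]] x cC by simp
    then have "gcomp R Rg x g \<otimes> c = gcomp R Rg (x \<otimes> c) (g + d)" by simp
    also have "\<dots> \<in> p" using p x unfolding graded_ideal_def by simp
    finally show ?thesis using R.gcomp_carrier[OF dsR x(1)] by simp
  qed
  then show ?thesis unfolding graded_ideal_def using I by blast
qed

lemma chain_graded:
  assumes C: "C \<noteq> {}" "\<And>I. I \<in> C \<Longrightarrow> graded_ideal R Rg I"
    and ch: "\<And>I J. I \<in> C \<Longrightarrow> J \<in> C \<Longrightarrow> I \<subseteq> J \<or> J \<subseteq> I"
  shows "graded_ideal R Rg (\<Union>C)"
proof -
  have Id: "ideal I R" if "I \<in> C" for I using C(2)[OF that] unfolding graded_ideal_def by simp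
  have "ideal (\<Union>C) R"
  proof (rule R.ideal_intro)
    show "\<Union>C \<subseteq> carrier R" using idealD(1)[OF Id] by blast
    show "\<zero> \<in> \<Union>C" using C(1) idealD(2)[OF Id] by blast
    show "a \<oplus> b \<in> \<Union>C" if ab: "a \<in> \<Union>C" "b \<in> \<Union>C" for a b
    proof -
      obtain I J where IJ: "I \<in> C" "J \<in> C" "a \<in> I" "b \<in> J" using ab by blast
      show ?thesis
      proof (cases "I \<subseteq> J")
        case True then show ?thesis using IJ idealD(3)[OF Id[OF IJ(2)]] by blast
      next
        case False then have "J \<subseteq> I" using ch IJ by blast
        then show ?thesis using IJ idealD(3)[OF Id[OF IJ(1)]] by blast
      qed
    qed
    show "\<ominus> a \<in> \<Union>C" if "a \<in> \<Union>C" for a using that idealD(4)[OF Id] by blast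
    show "x \<otimes> a \<in> \<Union>C" if "a \<in> \<Union>C" "x \<in> carrier R" for a x using that idealD(5)[OF Id] by blast
  qed
  moreover have "\<forall>x \<in> \<Union>C. \<forall>g. gcomp R Rg x g \<in> \<Union>C"
    using C(2) unfolding graded_ideal_def by blast
  ultimately show ?thesis unfolding graded_ideal_def by simp
qed

lemma prime_avoid:
  assumes J: "graded_ideal R Rg J" and r: "r \<in> hom_elems Rg" and nJ: "\<And>k::nat. r [^] k \<notin> J"
  shows "\<exists>p. graded_prime_ideal R Rg p \<and> J \<subseteq> p \<and> r \<notin> p"
proof -
  define A where "A = {I. graded_ideal R Rg I \<and> J \<subseteq> I \<and> (\<forall>k::nat. r [^] k \<notin> I)}"
  have "\<exists>p\<in>A. \<forall>Y\<in>A. p \<subseteq> Y \<longrightarrow> Y = p"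
  proof (rule subset_Zorn)
    fix C assume ch: "subset.chain A C"
    show "\<exists>U\<in>A. \<forall>Y\<in>C. Y \<subseteq> U"
    proof (cases "C = {}")
      case True
      then show ?thesis using J nJ unfolding A_def by auto
    next
      case False
      have CA: "C \<subseteq> A" and cc: "\<And>I J. I \<in> C \<Longrightarrow> J \<in> C \<Longrightarrow> I \<subseteq> J \<or> J \<subseteq> I"
        using ch unfolding subset.chain_def by auto
      have "graded_ideal R Rg (\<Union>C)" using chain_graded[OF False _ cc] CA unfolding A_def by blast
      moreover have "J \<subseteq> \<Union>C" using False CA unfolding A_def by blast
      moreover have "\<forall>k::nat. r [^] k \<notin> \<Union>C" using CA unfolding A_def by blast
      ultimately show ?thesis unfolding A_def by blast
    qed
  qed
  then obtain p where pA: "p \<in> A" and pmax: "\<And>Y. Y \<in> A \<Longrightarrow> p \<subseteq> Y \<Longrightarrow> Y = p" by blast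
  have pg: "graded_ideal R Rg p" and Jp: "J \<subseteq> p" and pr: "\<And>k::nat. r [^] k \<notin> p"
    using pA unfolding A_def by auto
  have pI: "ideal p R" using pg unfolding graded_ideal_def by simp
  obtain dr where dr: "r \<in> Rg dr" using r hom_iff by auto
  have rC: "r \<in> carrier R" using dr RgC by auto
  have enlarge: "\<exists>k::nat. r [^] k \<otimes> c \<in> p" if c: "c \<in> Rg d" and y: "y \<in> carrier R" "y \<notin> p" "y \<otimes> c \<in> p" for c d y
  proof -
    define P where "P = {x \<in> carrier R. x \<otimes> c \<in> p}"
    have cC: "c \<in> carrier R" using c RgC by auto
    have Pg: "graded_ideal R Rg P" unfolding P_def using colonR_graded[OF pg c] .
    have pP: "p \<subseteq> P" unfolding P_def using idealD(1,6)[OF pI] cC by auto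
    have "P \<noteq> p" using y unfolding P_def by auto
    then have "P \<notin> A" using pmax pP by blast
    then have "\<exists>k::nat. r [^] k \<in> P" using Pg pP Jp unfolding A_def by auto
    then show ?thesis unfolding P_def by auto
  qed
  have prime: "a \<in> p \<or> b \<in> p" if a: "a \<in> hom_elems Rg" and b: "b \<in> hom_elems Rg" and ab: "a \<otimes> b \<in> p" for a b
  proof (rule ccontr)
    assume "\<not> (a \<in> p \<or> b \<in> p)"
    then have na: "a \<notin> p" and nb: "b \<notin> p" by auto
    obtain db where db: "b \<in> Rg db" using b hom_iff by auto
    have aC: "a \<in> carrier R" and bC: "b \<in> carrier R" using a b RgC hom_iff by auto
    obtain k::nat where k: "r [^] k \<otimes> b \<in> p" using enlarge[OF db aC na ab] by auto
    obtain dk where dk: "r [^] k \<in> Rg dk" using pow_hom[OF dr] by auto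
    have "b \<otimes> r [^] k \<in> p" using k R.m_comm[OF bC] rC by simp
    then obtain l::nat where "r [^] l \<otimes> r [^] k \<in> p" using enlarge[OF dk bC nb] by auto
    then have "r [^] (l + k) \<in> p" using R.nat_pow_mult[OF rC] by simp
    then show False using pr by blast
  qed
  have "\<one> \<notin> p" using pr[of 0] by simp
  then have "p \<noteq> carrier R" by auto
  moreover have "r \<notin> p" using pr[of 1] rC by simp
  ultimately show ?thesis unfolding graded_prime_ideal_def using pg Jp prime by blast
qed

lemma rad_avoid:
  assumes I: "graded_ideal R Rg I" and r: "r \<in> hom_elems Rg"
    and allp: "\<And>p. graded_prime_ideal R Rg p \<Longrightarrow> I \<subseteq> p \<Longrightarrow> r \<in> p"
  shows "\<exists>n::nat. n > 0 \<and> r [^] n \<in> I"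
proof -
  have rC: "r \<in> carrier R" using r RgC hom_iff by auto
  have "\<exists>k::nat. r [^] k \<in> I" using prime_avoid[OF I r] allp by blast
  then obtain k::nat where "r [^] k \<in> I" by blast
  then have "r [^] k \<otimes> r \<in> I" using idealD(6)[of I] I rC unfolding graded_ideal_def by blast
  then have "r [^] Suc k \<in> I" by simp
  then show ?thesis by blast
qed

end


lemma (in abelian_group) finsum_neg:
  assumes "finite S" "f \<in> S \<rightarrow> carrier G"
  shows "finsum G (\<lambda>i. \<ominus> f i) S = \<ominus> finsum G f S"
  using assms
proof (induct S rule: finite_induct)
  case empty then show ?case using l_neg[OF zero_closed] r_zero[OF a_inv_closed[OF zero_closed]] by (simp only: finsum_empty)
next
  case (insert x F)
  then show ?case by (simp add: Pi_def finsum_insert minus_add)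
qed

context grmod
begin

lemma zero_graded: "graded_submodule R M Mg {\<zero>\<^bsub>M\<^esub>}"
proof -
  have "submodule {\<zero>\<^bsub>M\<^esub>} R M" by (rule submoduleI) auto
  moreover have "gcomp M Mg \<zero>\<^bsub>M\<^esub> g \<in> {\<zero>\<^bsub>M\<^esub>}" for g using M.gcomp_zero[OF dsM] by simp
  ultimately show ?thesis unfolding graded_submodule_def by simp
qed

lemma Ann_graded: "graded_ideal R Rg (Ann R M)"
  unfolding Ann_def using colon_graded[OF zero_graded] .

lemma Ann_ideal: "ideal (Ann R M) R"
  using Ann_graded unfolding graded_ideal_def by simp

lemma pi_hom: "ring_hom_cring R (Rbar R M) ((+>) (Ann R M))"
  unfolding Rbar_def by (rule ideal.rcos_ring_hom_cring[OF Ann_ideal R.is_cring])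

lemma Ann_abel: "abelian_subgroup (Ann R M) R"
  by (rule abelian_subgroupI3[OF idealD(7)[OF Ann_ideal] R.abelian_group_axioms])

lemma pi_eq:
  assumes "x \<in> carrier R" "y \<in> carrier R" "Ann R M +> x = Ann R M +> y"
  shows "x \<ominus> y \<in> Ann R M"
proof -
  have "x \<in> Ann R M +> x" using abelian_subgroup.a_rcos_self[OF Ann_abel assms(1)] .
  then have "x \<in> Ann R M +> y" using assms(3) by simp
  then show ?thesis using abelian_subgroup.a_rcos_module_minus[OF Ann_abel R.ring_axioms assms(2,1)] by simp
qed

lemma pi_eq2:
  assumes "x \<in> carrier R" "y \<in> carrier R" "x \<ominus> y \<in> Ann R M"
  shows "Ann R M +> x = Ann R M +> y"
proof -
  have "x \<in> Ann R M +> y" using abelian_subgroup.a_rcos_module_minus[OF Ann_abel R.ring_axioms assms(2,1)] assms(3) by simp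
  then show ?thesis using abelian_subgroup.a_repr_independence'[OF Ann_abel _ assms(2)] by simp
qed

lemma pi_mem:
  assumes I: "ideal I R" and sub: "Ann R M \<subseteq> I" and x: "x \<in> carrier R"
  shows "Ann R M +> x \<in> (\<lambda>a. Ann R M +> a) ` I \<longleftrightarrow> x \<in> I"
proof
  assume "Ann R M +> x \<in> (\<lambda>a. Ann R M +> a) ` I"
  then obtain y where y: "y \<in> I" "Ann R M +> x = Ann R M +> y" by auto
  have yC: "y \<in> carrier R" using y idealD(1)[OF I] by auto
  have "x \<ominus> y \<in> I" using pi_eq[OF x yC y(2)] sub by auto
  then have "(x \<ominus> y) \<oplus> y \<in> I" using idealD(3)[OF I] y by simp
  moreover have "(x \<ominus> y) \<oplus> y = x" using x yC by (simp add: R.minus_eq R.a_assoc R.l_neg)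
  ultimately show "x \<in> I" by simp
qed auto

lemma Rbar_carrier:
  assumes "z \<in> carrier (Rbar R M)"
  shows "\<exists>a \<in> carrier R. z = Ann R M +> a"
  using assms unfolding Rbar_def FactRing_def A_RCOSETS_def' by auto

end


context grmod
begin

lemma Q_cring: "cring (Rbar R M)"
  unfolding Rbar_def by (rule ideal.quotient_is_cring[OF Ann_ideal R.is_cring])

lemma Q_ab: "abelian_group (Rbar R M)"
  using Q_cring cring.axioms(1) ring.axioms(1) by blast

lemma Rbar_gcomp:
  assumes a: "a \<in> carrier R"
  shows "gcomp (Rbar R M) (Rbar_grading R Rg M) (Ann R M +> a) = (\<lambda>g. Ann R M +> gcomp R Rg a g)"
proof -
  interpret H: ring_hom_cring R "Rbar R M" "(+>) (Ann R M)" by (rule pi_hom)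
  define c0 where "c0 = (\<lambda>g. Ann R M +> gcomp R Rg a g)"
  define S where "S = {g. gcomp R Rg a g \<noteq> \<zero>}"
  have finS: "finite S" unfolding S_def using R.gcomp_fin[OF dsR a] .
  have acC: "gcomp R Rg a g \<in> carrier R" for g using R.gcomp_carrier[OF dsR a] .
  have QgC: "Rbar_grading R Rg M g \<subseteq> carrier (Rbar R M)" for g
    unfolding Rbar_grading_def using RgC by auto
  have ex: "gdecomp (Rbar R M) (Rbar_grading R Rg M) (Ann R M +> a) c0"
  proof (rule H.S.gdecompI[OF _ QgC finS])
    show "c0 g \<in> Rbar_grading R Rg M g" for g
      unfolding c0_def Rbar_grading_def using R.gcomp_in[OF dsR a] by auto
    show "c0 g = \<zero>\<^bsub>Rbar R M\<^esub>" if "g \<notin> S" for g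
      using that unfolding c0_def S_def by auto
    have "Ann R M +> a = Ann R M +> finsum R (gcomp R Rg a) S"
      using R.gcomp_sum[OF dsR a finS] S_def by simp
    also have "\<dots> = finsum (Rbar R M) c0 S"
      unfolding c0_def using H.hom_finsum[of "gcomp R Rg a" S] acC by (simp add: comp_def)
    finally show "Ann R M +> a = finsum (Rbar R M) c0 S" .
  qed
  have uniq: "c' = c0" if gd: "gdecomp (Rbar R M) (Rbar_grading R Rg M) (Ann R M +> a) c'" for c'
  proof -
    have "\<forall>g. \<exists>y. y \<in> Rg g \<and> c' g = Ann R M +> y"
      using gd unfolding gdecomp_def Rbar_grading_def by auto
    then obtain b where b: "\<And>g. b g \<in> Rg g" "\<And>g. c' g = Ann R M +> b g" by metis
    have bC: "b g \<in> carrier R" for g using b(1) RgC by auto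
    define S' where "S' = {g. c' g \<noteq> \<zero>\<^bsub>Rbar R M\<^esub>}"
    have finS': "finite S'" using gd unfolding gdecomp_def S'_def by simp
    define d where "d = (\<lambda>g. if g \<in> S' then b g else \<zero>)"
    have dR: "d g \<in> Rg g" for g unfolding d_def using b(1) R.grading_zero[OF dsR] by auto
    have dC: "d g \<in> carrier R" for g using dR RgC by auto
    define y where "y = finsum R d S'"
    have yC: "y \<in> carrier R" unfolding y_def using dC by auto
    have gy: "gdecomp R Rg y d"
      by (rule R.gdecompI[OF dR RgC finS']) (auto simp: d_def y_def)
    have "Ann R M +> a = finsum (Rbar R M) c' S'" using gd unfolding gdecomp_def S'_def by simp
    also have "\<dots> = finsum (Rbar R M) (\<lambda>g. Ann R M +> d g) S'"
      by (rule H.S.finsum_cong') (auto simp: d_def b(2) dC bC)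
    also have "\<dots> = Ann R M +> y"
      unfolding y_def using H.hom_finsum[of d S'] dC by (simp add: comp_def)
    finally have "a \<ominus> y \<in> Ann R M" using pi_eq[OF a yC] by simp
    define e where "e = (\<lambda>g. gcomp R Rg a g \<ominus> d g)"
    have eR: "e g \<in> Rg g" for g
    proof -
      have as: "additive_subgroup (Rg g) R" using R.grading_subgroup[OF dsR] .
      show ?thesis unfolding e_def R.minus_eq
        using additive_subgroup.a_closed[OF as R.gcomp_in[OF dsR a] additive_subgroup.a_inv_closed[OF as dR]] .
    qed
    have fin2: "finite (S \<union> S')" using finS finS' by simp
    have gae: "gdecomp R Rg (a \<ominus> y) e"
    proof (rule R.gdecompI[OF eR RgC fin2])
      show "e g = \<zero>" if "g \<notin> S \<union> S'" for g using that unfolding e_def d_def S_def by auto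
      have "a = finsum R (gcomp R Rg a) (S \<union> S')" using R.gcomp_sum[OF dsR a fin2] S_def by auto
      moreover have "y = finsum R d (S \<union> S')"
        by (rule R.gdecompD[OF gy RgC fin2]) (auto simp: d_def)
      ultimately have "a \<ominus> y = finsum R (gcomp R Rg a) (S \<union> S') \<oplus> \<ominus> finsum R d (S \<union> S')"
        by (simp add: R.minus_eq)
      also have "\<dots> = finsum R (gcomp R Rg a) (S \<union> S') \<oplus> finsum R (\<lambda>g. \<ominus> d g) (S \<union> S')"
        using R.finsum_neg[OF fin2, of d] dC by auto
      also have "\<dots> = finsum R (\<lambda>g. gcomp R Rg a g \<oplus> \<ominus> d g) (S \<union> S')"
        using R.finsum_addf[of "gcomp R Rg a" "S \<union> S'" "\<lambda>g. \<ominus> d g"] acC dC by auto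
      also have "\<dots> = finsum R e (S \<union> S')" unfolding e_def by (simp add: R.minus_eq)
      finally show "a \<ominus> y = finsum R e (S \<union> S')" .
    qed
    have amy: "a \<ominus> y \<in> carrier R" using a yC by simp
    have "gcomp R Rg (a \<ominus> y) = e" using R.gcomp_eq[OF dsR amy gae] .
    then have eAnn: "e g \<in> Ann R M" for g using Ann_graded \<open>a \<ominus> y \<in> Ann R M\<close>
      unfolding graded_ideal_def by metis
    have "c' g = c0 g" for g
    proof -
      have "Ann R M +> gcomp R Rg a g = Ann R M +> d g"
        using pi_eq2[OF acC dC] eAnn unfolding e_def by simp
      then show ?thesis unfolding c0_def d_def S'_def using b(2) by (cases "g \<in> S'") (auto simp: S'_def)
    qed
    then show ?thesis by auto
  qed
  have "gcomp (Rbar R M) (Rbar_grading R Rg M) (Ann R M +> a) = c0"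
    unfolding gcomp_def by (rule the_equality[where P="gdecomp (Rbar R M) (Rbar_grading R Rg M) (Ann R M +> a)", OF ex uniq])
  then show ?thesis unfolding c0_def .
qed

end


context grmod
begin

lemma prime_to_qp:
  assumes p: "graded_prime_ideal R Rg p" and sub: "Ann R M \<subseteq> p"
  shows "(\<lambda>a. Ann R M +> a) ` p \<in> qp_spec_ring (Rbar R M) (Rbar_grading R Rg M)"
proof -
  interpret H: ring_hom_cring R "Rbar R M" "(+>) (Ann R M)" by (rule pi_hom)
  define q where "q = (\<lambda>a. Ann R M +> a) ` p"
  have pg: "graded_ideal R Rg p" using p unfolding graded_prime_ideal_def by simp
  have pI: "ideal p R" using pg unfolding graded_ideal_def by simp
  have pC: "p \<subseteq> carrier R" using idealD(1)[OF pI] .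
  have qI: "ideal q (Rbar R M)"
    unfolding q_def Rbar_def using R.ring_ideal_imp_quot_ideal[OF Ann_ideal pI] by simp
  have qg: "graded_ideal (Rbar R M) (Rbar_grading R Rg M) q"
  proof -
    have "gcomp (Rbar R M) (Rbar_grading R Rg M) x g \<in> q" if xq: "x \<in> q" for x g
    proof -
      obtain a where a: "a \<in> p" "x = Ann R M +> a" using xq unfolding q_def by auto
      have aC: "a \<in> carrier R" using a pC by auto
      have "gcomp R Rg a g \<in> p" using pg a unfolding graded_ideal_def by simp
      then show ?thesis using Rbar_gcomp[OF aC] a unfolding q_def by simp
    qed
    then show ?thesis unfolding graded_ideal_def using qI by simp
  qed
  have one: "\<one> \<notin> p" using p ideal.one_imp_carrier[OF pI] unfolding graded_prime_ideal_def by blast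
  have "Ann R M +> \<one> \<notin> q" unfolding q_def using pi_mem[OF pI sub R.one_closed] one by blast
  moreover have "Ann R M +> \<one> \<in> carrier (Rbar R M)" by simp
  ultimately have qne: "q \<noteq> carrier (Rbar R M)" by blast
  have inrad: "Ann R M +> x \<in> graded_radical (Rbar R M) (Rbar_grading R Rg M) q" if x: "x \<in> p" for x
  proof -
    have xC: "x \<in> carrier R" using x pC by auto
    have "gcomp (Rbar R M) (Rbar_grading R Rg M) (Ann R M +> x) g [^]\<^bsub>Rbar R M\<^esub> (1::nat) \<in> q" for g
    proof -
      have "gcomp R Rg x g \<in> p" using pg x unfolding graded_ideal_def by simp
      moreover have "gcomp R Rg x g \<in> carrier R" using R.gcomp_carrier[OF dsR xC] .
      ultimately show ?thesis using Rbar_gcomp[OF xC] unfolding q_def by simp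
    qed
    then show ?thesis unfolding graded_radical_def using xC by (auto intro: exI[of _ "1::nat"])
  qed
  have qp: "a \<in> graded_radical (Rbar R M) (Rbar_grading R Rg M) q \<or> b \<in> graded_radical (Rbar R M) (Rbar_grading R Rg M) q"
    if a: "a \<in> hom_elems (Rbar_grading R Rg M)" and b: "b \<in> hom_elems (Rbar_grading R Rg M)"
      and ab: "a \<otimes>\<^bsub>Rbar R M\<^esub> b \<in> q" for a b
  proof -
    obtain a' ga where a': "a' \<in> Rg ga" "a = Ann R M +> a'" using a unfolding hom_elems_def Rbar_grading_def by auto
    obtain b' gb where b': "b' \<in> Rg gb" "b = Ann R M +> b'" using b unfolding hom_elems_def Rbar_grading_def by auto
    have a'C: "a' \<in> carrier R" and b'C: "b' \<in> carrier R" using a' b' RgC by auto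
    have "Ann R M +> (a' \<otimes> b') \<in> q" using ab a' b' a'C b'C by simp
    then have "a' \<otimes> b' \<in> p" unfolding q_def using pi_mem[OF pI sub R.m_closed[OF a'C b'C]] by blast
    then have "a' \<in> p \<or> b' \<in> p" using p a' b' unfolding graded_prime_ideal_def hom_elems_def by blast
    then show ?thesis using inrad a' b' by blast
  qed
  show ?thesis unfolding qp_spec_ring_def graded_qp_ideal_def q_def[symmetric]
    using qg qne qp by blast
qed

lemma Ann_sub_colon:
  assumes "submodule Q R M" shows "Ann R M \<subseteq> colon R M Q"
  unfolding Ann_def colon_def using subD(2)[OF assms] by auto

lemma colon_eq:
  assumes Qs: "submodule Q R M" and psi: "psi_q R M Q = (\<lambda>a. Ann R M +> a) ` p"
    and pI: "ideal p R" and sub: "Ann R M \<subseteq> p"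
  shows "colon R M Q = p"
proof
  have CI: "ideal (colon R M Q) R" using colon_ideal[OF Qs] .
  have AC: "Ann R M \<subseteq> colon R M Q" using Ann_sub_colon[OF Qs] .
  show "colon R M Q \<subseteq> p"
  proof
    fix x assume x: "x \<in> colon R M Q"
    have xC: "x \<in> carrier R" using x unfolding colon_def by simp
    have "Ann R M +> x \<in> (\<lambda>a. Ann R M +> a) ` p" using psi x unfolding psi_q_def by blast
    then show "x \<in> p" using pi_mem[OF pI sub xC] by simp
  qed
  show "p \<subseteq> colon R M Q"
  proof
    fix x assume x: "x \<in> p"
    have xC: "x \<in> carrier R" using x idealD(1)[OF pI] by auto
    have "Ann R M +> x \<in> (\<lambda>a. Ann R M +> a) ` colon R M Q" using psi x unfolding psi_q_def by blast
    then show "x \<in> colon R M Q" using pi_mem[OF CI AC xC] by simp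
  qed
qed

lemma scal_graded:
  assumes r: "r \<in> Rg d"
  shows "graded_submodule R M Mg (scal_sub M r)"
proof -
  have rC: "r \<in> carrier R" using r RgC by auto
  have sm: "submodule (scal_sub M r) R M"
  proof (rule submoduleI)
    show "scal_sub M r \<subseteq> carrier M" unfolding scal_sub_def using rC by auto
    show "\<zero>\<^bsub>M\<^esub> \<in> scal_sub M r" unfolding scal_sub_def using rC
      by (auto intro!: exI[of _ "\<zero>\<^bsub>M\<^esub>"])
    show "\<ominus>\<^bsub>M\<^esub> a \<in> scal_sub M r" if "a \<in> scal_sub M r" for a
      using that rC unfolding scal_sub_def by (auto simp: smult_r_minus[symmetric])
    show "a \<oplus>\<^bsub>M\<^esub> b \<in> scal_sub M r" if "a \<in> scal_sub M r" "b \<in> scal_sub M r" for a b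
      using that rC unfolding scal_sub_def by (auto simp: smult_r_distr[symmetric])
    show "c \<odot>\<^bsub>M\<^esub> x \<in> scal_sub M r" if cx: "c \<in> carrier R" "x \<in> scal_sub M r" for c x
    proof -
      obtain m where m: "m \<in> carrier M" "x = r \<odot>\<^bsub>M\<^esub> m" using cx(2) unfolding scal_sub_def by auto
      have "c \<odot>\<^bsub>M\<^esub> x = (c \<otimes> r) \<odot>\<^bsub>M\<^esub> m" using smult_assoc1[OF cx(1) rC m(1)] m(2) by simp
      also have "\<dots> = (r \<otimes> c) \<odot>\<^bsub>M\<^esub> m" using R.m_comm[OF cx(1) rC] by simp
      also have "\<dots> = r \<odot>\<^bsub>M\<^esub> (c \<odot>\<^bsub>M\<^esub> m)" using smult_assoc1[OF rC cx(1) m(1)] .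
      finally show ?thesis unfolding scal_sub_def using m cx(1) by auto
    qed
  qed
  have "gcomp M Mg x g \<in> scal_sub M r" if xs: "x \<in> scal_sub M r" for x g
  proof -
    obtain m where m: "m \<in> carrier M" "x = r \<odot>\<^bsub>M\<^esub> m" using xs unfolding scal_sub_def by auto
    have "gcomp M Mg x = (\<lambda>k. r \<odot>\<^bsub>M\<^esub> gcomp M Mg m (- d + k))"
      using M.gcomp_eq[OF dsM _ shiftM2[OF r m(1)]] m rC by simp
    then show ?thesis unfolding scal_sub_def using M.gcomp_carrier[OF dsM m(1)] by auto
  qed
  then show ?thesis unfolding graded_submodule_def using sm by simp
qed

lemma pow_colon:
  assumes s: "s \<in> colon R M (scal_sub M r)" and rC: "r \<in> carrier R"
  shows "s [^] (n::nat) \<in> colon R M (scal_sub M (r [^] n))"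
proof (induct n)
  case 0
  show ?case unfolding colon_def scal_sub_def by auto (metis smult_one)
next
  case (Suc n)
  have sC: "s \<in> carrier R" using s unfolding colon_def by simp
  have "s [^] Suc n \<odot>\<^bsub>M\<^esub> m \<in> scal_sub M (r [^] Suc n)" if m: "m \<in> carrier M" for m
  proof -
    obtain m1 where m1: "m1 \<in> carrier M" "s \<odot>\<^bsub>M\<^esub> m = r \<odot>\<^bsub>M\<^esub> m1"
      using s m unfolding colon_def scal_sub_def by auto
    obtain m2 where m2: "m2 \<in> carrier M" "s [^] n \<odot>\<^bsub>M\<^esub> m1 = r [^] n \<odot>\<^bsub>M\<^esub> m2"
      using Suc m1(1) unfolding colon_def scal_sub_def by auto
    have "s [^] Suc n \<odot>\<^bsub>M\<^esub> m = s [^] n \<odot>\<^bsub>M\<^esub> (s \<odot>\<^bsub>M\<^esub> m)" using sC m by (simp add: smult_assoc1)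
    also have "\<dots> = s [^] n \<odot>\<^bsub>M\<^esub> (r \<odot>\<^bsub>M\<^esub> m1)" using m1 by simp
    also have "\<dots> = r \<odot>\<^bsub>M\<^esub> (s [^] n \<odot>\<^bsub>M\<^esub> m1)"
      using sC rC m1(1) by (simp add: smult_assoc1[symmetric] R.m_comm)
    also have "\<dots> = r \<odot>\<^bsub>M\<^esub> (r [^] n \<odot>\<^bsub>M\<^esub> m2)" using m2 by simp
    also have "\<dots> = r [^] Suc n \<odot>\<^bsub>M\<^esub> m2"
      using rC m2(1) by (simp add: smult_assoc1[symmetric] R.m_comm)
    finally show ?thesis unfolding scal_sub_def using m2(1) by auto
  qed
  then show ?case unfolding colon_def using sC by simp
qed

lemma spec_facts:
  assumes "Q \<in> qp_spec R Rg M Mg"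
  shows "graded_submodule R M Mg Q" "submodule Q R M" "Q \<noteq> carrier M"
  using assms unfolding qp_spec_def graded_qp_submodule_def graded_submodule_def by auto

lemma GX_char:
  assumes r: "r \<in> Rg d" and Q: "Q \<in> qp_spec R Rg M Mg"
  shows "Q \<in> GX R Rg M Mg r \<longleftrightarrow> \<not> (\<exists>n::nat. n > 0 \<and> r [^] n \<in> colon R M Q)"
proof -
  have rC: "r \<in> carrier R" using r RgC by auto
  have QI: "ideal (colon R M Q) R" using colon_ideal[OF spec_facts(2)[OF Q]] .
  have Qs: "submodule Q R M" using spec_facts(2)[OF Q] .
  have "graded_radical R Rg (colon R M (scal_sub M r)) \<subseteq> graded_radical R Rg (colon R M Q)
        \<longleftrightarrow> (\<exists>n::nat. n > 0 \<and> r [^] n \<in> colon R M Q)"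
  proof
    assume h: "graded_radical R Rg (colon R M (scal_sub M r)) \<subseteq> graded_radical R Rg (colon R M Q)"
    have "r \<in> colon R M (scal_sub M r)" unfolding colon_def scal_sub_def using rC by auto
    then have "r \<in> graded_radical R Rg (colon R M (scal_sub M r))"
      using ideal_sub_rad[OF colon_graded[OF scal_graded[OF r]]] by auto
    then have "r \<in> graded_radical R Rg (colon R M Q)" using h by auto
    then show "\<exists>n::nat. n > 0 \<and> r [^] n \<in> colon R M Q" using rad_hom[OF r QI] by simp
  next
    assume "\<exists>n::nat. n > 0 \<and> r [^] n \<in> colon R M Q"
    then obtain n::nat where n: "n > 0" "r [^] n \<in> colon R M Q" by blast
    have csub: "colon R M (scal_sub M (r [^] n)) \<subseteq> colon R M Q"
    proof
      fix y assume y: "y \<in> colon R M (scal_sub M (r [^] n))"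
      have "y \<odot>\<^bsub>M\<^esub> m \<in> Q" if m: "m \<in> carrier M" for m
      proof -
        obtain m' where "m' \<in> carrier M" "y \<odot>\<^bsub>M\<^esub> m = r [^] n \<odot>\<^bsub>M\<^esub> m'"
          using y m unfolding colon_def scal_sub_def by auto
        then show ?thesis using n(2) unfolding colon_def by auto
      qed
      then show "y \<in> colon R M Q" using y unfolding colon_def by simp
    qed
    show "graded_radical R Rg (colon R M (scal_sub M r)) \<subseteq> graded_radical R Rg (colon R M Q)"
    proof
      fix x assume x: "x \<in> graded_radical R Rg (colon R M (scal_sub M r))"
      have xC: "x \<in> carrier R" using x unfolding graded_radical_def by simp
      have "\<exists>j::nat. j > 0 \<and> gcomp R Rg x g [^] j \<in> colon R M Q" for g
      proof -
        obtain k::nat where k: "k > 0" "gcomp R Rg x g [^] k \<in> colon R M (scal_sub M r)"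
          using x unfolding graded_radical_def by blast
        have cC: "gcomp R Rg x g \<in> carrier R" using R.gcomp_carrier[OF dsR xC] .
        have "(gcomp R Rg x g [^] k) [^] n \<in> colon R M (scal_sub M (r [^] n))"
          using pow_colon[OF k(2) rC] .
        then have "gcomp R Rg x g [^] (k * n) \<in> colon R M Q" using csub R.nat_pow_pow[OF cC] by auto
        then show ?thesis using k(1) n(1) by (metis nat_0_less_mult_iff)
      qed
      then show "x \<in> graded_radical R Rg (colon R M Q)" unfolding graded_radical_def using xC by simp
    qed
  qed
  then show ?thesis unfolding GX_def qp_V_def using Q by blast
qed

end


context grmod
begin

lemma directed_graded:
  assumes C: "C \<noteq> {}" "\<And>I. I \<in> C \<Longrightarrow> graded_ideal R Rg I"
    and dir: "\<And>I J. I \<in> C \<Longrightarrow> J \<in> C \<Longrightarrow> \<exists>L\<in>C. I \<subseteq> L \<and> J \<subseteq> L"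
  shows "graded_ideal R Rg (\<Union>C)"
proof -
  have Id: "ideal I R" if "I \<in> C" for I using C(2)[OF that] unfolding graded_ideal_def by simp
  have "ideal (\<Union>C) R"
  proof (rule R.ideal_intro)
    show "\<Union>C \<subseteq> carrier R" using idealD(1)[OF Id] by blast
    show "\<zero> \<in> \<Union>C" using C(1) idealD(2)[OF Id] by blast
    show "a \<oplus> b \<in> \<Union>C" if ab: "a \<in> \<Union>C" "b \<in> \<Union>C" for a b
    proof -
      obtain I J where IJ: "I \<in> C" "J \<in> C" "a \<in> I" "b \<in> J" using ab by blast
      obtain L where L: "L \<in> C" "I \<subseteq> L" "J \<subseteq> L" using dir[OF IJ(1,2)] by blast
      show ?thesis using IJ L idealD(3)[OF Id[OF L(1)]] by blast
    qed
    show "\<ominus> a \<in> \<Union>C" if "a \<in> \<Union>C" for a using that idealD(4)[OF Id] by blast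
    show "x \<otimes> a \<in> \<Union>C" if "a \<in> \<Union>C" "x \<in> carrier R" for a x using that idealD(5)[OF Id] by blast
  qed
  moreover have "\<forall>x \<in> \<Union>C. \<forall>g. gcomp R Rg x g \<in> \<Union>C"
    using C(2) unfolding graded_ideal_def by blast
  ultimately show ?thesis unfolding graded_ideal_def by simp
qed

definition IF :: "('b set set \<Rightarrow> 'b set) \<Rightarrow> 'b set set set \<Rightarrow> 'a set" where
  "IF K F = {x \<in> carrier R. \<forall>p. graded_prime_ideal R Rg p \<and> Ann R M \<subseteq> p \<and> (\<forall>U\<in>F. colon R M (K U) \<subseteq> p) \<longrightarrow> x \<in> p}"

lemma IF_graded: "graded_ideal R Rg (IF K F)"
proof -
  have PI: "ideal p R" if "graded_prime_ideal R Rg p" for p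
    using that unfolding graded_prime_ideal_def graded_ideal_def by simp
  have "ideal (IF K F) R"
  proof (rule R.ideal_intro)
    show "IF K F \<subseteq> carrier R" unfolding IF_def by auto
    show "\<zero> \<in> IF K F" unfolding IF_def using idealD(2)[OF PI] by auto
    show "a \<oplus> b \<in> IF K F" if "a \<in> IF K F" "b \<in> IF K F" for a b
      using that idealD(3)[OF PI] unfolding IF_def by auto
    show "\<ominus> a \<in> IF K F" if "a \<in> IF K F" for a
      using that idealD(4)[OF PI] unfolding IF_def by auto
    show "x \<otimes> a \<in> IF K F" if "a \<in> IF K F" "x \<in> carrier R" for a x
      using that idealD(5)[OF PI] unfolding IF_def by auto
  qed
  moreover have "gcomp R Rg x g \<in> IF K F" if "x \<in> IF K F" for x g
    using that R.gcomp_carrier[OF dsR] unfolding IF_def graded_prime_ideal_def graded_ideal_def by auto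
  ultimately show ?thesis unfolding graded_ideal_def by blast
qed

lemma IF_mono:
  assumes "F \<subseteq> G" shows "IF K F \<subseteq> IF K G"
proof
  fix x assume x: "x \<in> IF K F"
  have xC: "x \<in> carrier R" using x unfolding IF_def by simp
  have "x \<in> p" if "graded_prime_ideal R Rg p" "Ann R M \<subseteq> p" "\<forall>U\<in>G. colon R M (K U) \<subseteq> p" for p
  proof -
    have "\<forall>U\<in>F. colon R M (K U) \<subseteq> p" using that(3) assms by blast
    then show ?thesis using x that(1,2) unfolding IF_def by blast
  qed
  then show "x \<in> IF K G" unfolding IF_def using xC by blast
qed

lemma IF_Ann: "Ann R M \<subseteq> IF K F'"
proof
  fix x assume x: "x \<in> Ann R M"
  have xC: "x \<in> carrier R" using x idealD(1)[OF Ann_ideal] by auto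
  have "x \<in> p" if "graded_prime_ideal R Rg p" "Ann R M \<subseteq> p" for p using that x by blast
  then show "x \<in> IF K F'" unfolding IF_def using xC by blast
qed

lemma IF_colon: "colon R M (K U) \<subseteq> IF K {U}"
proof
  fix x assume x: "x \<in> colon R M (K U)"
  have xC: "x \<in> carrier R" using x unfolding colon_def by simp
  have "x \<in> p" if "\<forall>V\<in>{U}. colon R M (K V) \<subseteq> p" for p using that x by blast
  then show "x \<in> IF K {U}" unfolding IF_def using xC by blast
qed

lemma GX_compact:
  assumes surj: "\<forall>q \<in> qp_spec_ring (Rbar R M) (Rbar_grading R Rg M).
           \<exists>Q \<in> qp_spec R Rg M Mg. psi_q R M Q = q"
    and r: "r \<in> Rg d"
  shows "qz_quasi_compact R Rg M Mg (GX R Rg M Mg r)"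
  unfolding qz_quasi_compact_def
proof (intro allI impI)
  fix UU assume h: "(\<forall>U\<in>UU. qz_open R Rg M Mg U) \<and> GX R Rg M Mg r \<subseteq> \<Union>UU"
  have rC: "r \<in> carrier R" using r RgC by auto
  have rh: "r \<in> hom_elems Rg" using r hom_iff by auto
  have "\<forall>U\<in>UU. \<exists>K. graded_submodule R M Mg K \<and> U = qp_spec R Rg M Mg - qp_V R Rg M Mg K"
    using h unfolding qz_open_def by blast
  then obtain K where K: "\<And>U. U \<in> UU \<Longrightarrow> graded_submodule R M Mg (K U)"
    "\<And>U. U \<in> UU \<Longrightarrow> U = qp_spec R Rg M Mg - qp_V R Rg M Mg (K U)"
    by metis
  have fin: "\<exists>F. F \<subseteq> UU \<and> finite F \<and> (\<exists>k::nat. r [^] k \<in> IF K F)"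
  proof (rule ccontr)
    assume nf: "\<not> ?thesis"
    define J where "J = \<Union>{IF K F | F. F \<subseteq> UU \<and> finite F}"
    have Jg: "graded_ideal R Rg J" unfolding J_def
    proof (rule directed_graded)
      have "IF K {} \<in> {IF K F |F. F \<subseteq> UU \<and> finite F}" by auto
      then show "{IF K F |F. F \<subseteq> UU \<and> finite F} \<noteq> {}" by (metis empty_iff)
      show "graded_ideal R Rg I" if "I \<in> {IF K F |F. F \<subseteq> UU \<and> finite F}" for I
        using that IF_graded by blast
      show "\<exists>L\<in>{IF K F |F. F \<subseteq> UU \<and> finite F}. I \<subseteq> L \<and> I' \<subseteq> L"
        if II: "I \<in> {IF K F |F. F \<subseteq> UU \<and> finite F}" "I' \<in> {IF K F |F. F \<subseteq> UU \<and> finite F}" for I I'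
      proof -
        obtain F where F1: "I = IF K F" "F \<subseteq> UU" "finite F" using II(1) by blast
        obtain F' where F2: "I' = IF K F'" "F' \<subseteq> UU" "finite F'" using II(2) by blast
        note F = F1 F2
        have "IF K F \<subseteq> IF K (F \<union> F')" "IF K F' \<subseteq> IF K (F \<union> F')" using IF_mono[of F "F \<union> F'" K] IF_mono[of F' "F \<union> F'" K] by simp_all
        moreover have "IF K (F \<union> F') \<in> {IF K F |F. F \<subseteq> UU \<and> finite F}" using F by auto
        ultimately show ?thesis using F(1,4) by blast
      qed
    qed
    have nJ: "r [^] k \<notin> J" for k::nat
    proof
      assume "r [^] k \<in> J"
      then obtain F where "F \<subseteq> UU" "finite F" "r [^] k \<in> IF K F" unfolding J_def by blast
      then show False using nf by blast
    qed
    obtain p where p: "graded_prime_ideal R Rg p" "J \<subseteq> p" "r \<notin> p"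
      using prime_avoid[OF Jg rh nJ] by blast
    have IFJ: "IF K F \<subseteq> J" if "F \<subseteq> UU" "finite F" for F unfolding J_def using that by blast
    have Ap: "Ann R M \<subseteq> p"
    proof -
      have "Ann R M \<subseteq> IF K {}" by (rule IF_Ann)
      then show ?thesis using IFJ[of "{}"] p(2) by auto
    qed
    have Kp: "colon R M (K U) \<subseteq> p" if "U \<in> UU" for U
    proof -
      have "colon R M (K U) \<subseteq> IF K {U}" by (rule IF_colon)
      then show ?thesis using IFJ[of "{U}"] that p(2) by auto
    qed
    have pI: "ideal p R" using p(1) unfolding graded_prime_ideal_def graded_ideal_def by simp
    obtain Q where Q: "Q \<in> qp_spec R Rg M Mg" "psi_q R M Q = (\<lambda>a. Ann R M +> a) ` p"
      using surj prime_to_qp[OF p(1) Ap] by blast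
    have cQ: "colon R M Q = p" using colon_eq[OF spec_facts(2)[OF Q(1)] Q(2) pI Ap] .
    have "Q \<in> GX R Rg M Mg r"
      using GX_char[OF r Q(1)] cQ pow_in_prime[OF p(1) rh] p(3) by blast
    then obtain U where U: "U \<in> UU" "Q \<in> U" using h by blast
    then have "Q \<notin> qp_V R Rg M Mg (K U)" using K(2) by blast
    then have "\<not> graded_radical R Rg (colon R M (K U)) \<subseteq> graded_radical R Rg (colon R M Q)"
      using Q(1) unfolding qp_V_def by blast
    moreover have "graded_radical R Rg (colon R M (K U)) \<subseteq> graded_radical R Rg (colon R M Q)"
      using rad_mono[OF Kp[OF U(1)]] prime_rad[OF p(1)] cQ by simp
    ultimately show False by blast
  qed
  then obtain F k where F: "F \<subseteq> UU" "finite F" and k: "r [^] (k::nat) \<in> IF K F" by blast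
  have "GX R Rg M Mg r \<subseteq> \<Union>F"
  proof
    fix Q assume QG: "Q \<in> GX R Rg M Mg r"
    have Q: "Q \<in> qp_spec R Rg M Mg" using QG unfolding GX_def by simp
    show "Q \<in> \<Union>F"
    proof (rule ccontr)
      assume nQ: "Q \<notin> \<Union>F"
      have sub: "graded_radical R Rg (colon R M (K U)) \<subseteq> graded_radical R Rg (colon R M Q)" if U: "U \<in> F" for U
      proof -
        have "Q \<notin> U" using nQ U by blast
        then have "Q \<in> qp_V R Rg M Mg (K U)" using K(2)[of U] U F(1) Q by blast
        then show ?thesis unfolding qp_V_def by blast
      qed
      have cg: "graded_ideal R Rg (colon R M Q)" using colon_graded[OF spec_facts(1)[OF Q]] .
      have "\<exists>n::nat. n > 0 \<and> r [^] n \<in> colon R M Q"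
      proof (rule rad_avoid[OF cg rh])
        fix p assume p: "graded_prime_ideal R Rg p" "colon R M Q \<subseteq> p"
        have "Ann R M \<subseteq> p" using Ann_sub_colon[OF spec_facts(2)[OF Q]] p(2) by blast
        moreover have "colon R M (K U) \<subseteq> p" if U: "U \<in> F" for U
        proof -
          have KU: "graded_submodule R M Mg (K U)" using K(1) U F(1) by blast
          have "colon R M (K U) \<subseteq> graded_radical R Rg (colon R M (K U))"
            using ideal_sub_rad[OF colon_graded[OF KU]] .
          also have "\<dots> \<subseteq> graded_radical R Rg (colon R M Q)" using sub[OF U] .
          also have "\<dots> \<subseteq> p" using rad_sub_prime[OF p(1) p(2)] .
          finally show ?thesis .
        qed
        ultimately have "r [^] k \<in> p" using k p(1) unfolding IF_def by blast
        then show "r \<in> p" using pow_in_prime[OF p(1) rh] by blast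
      qed
      then show False using GX_char[OF r Q] QG by blast
    qed
  qed
  then show "\<exists>F\<subseteq>UU. finite F \<and> GX R Rg M Mg r \<subseteq> \<Union>F" using F by blast
qed

lemma spec_GX_one: "qp_spec R Rg M Mg = GX R Rg M Mg \<one>"
proof
  show "GX R Rg M Mg \<one> \<subseteq> qp_spec R Rg M Mg" unfolding GX_def by blast
  show "qp_spec R Rg M Mg \<subseteq> GX R Rg M Mg \<one>"
  proof
    fix Q assume Q: "Q \<in> qp_spec R Rg M Mg"
    have "\<not> (\<exists>n::nat. n > 0 \<and> \<one> [^] n \<in> colon R M Q)"
    proof
      assume "\<exists>n::nat. n > 0 \<and> \<one> [^] n \<in> colon R M Q"
      then have "\<one> \<in> colon R M Q" by simp
      then have "carrier M \<subseteq> Q" unfolding colon_def by auto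
      moreover have "Q \<subseteq> carrier M" using subD(1)[OF spec_facts(2)[OF Q]] .
      ultimately show False using spec_facts(3)[OF Q] by blast
    qed
    then show "Q \<in> GX R Rg M Mg \<one>" using GX_char[OF one_hom Q] by blast
  qed
qed

lemma main:
  assumes surj: "\<forall>q \<in> qp_spec_ring (Rbar R M) (Rbar_grading R Rg M).
           \<exists>Q \<in> qp_spec R Rg M Mg. psi_q R M Q = q"
  shows "(\<forall>r \<in> hom_elems Rg. qz_open R Rg M Mg (GX R Rg M Mg r)
            \<and> qz_quasi_compact R Rg M Mg (GX R Rg M Mg r))
         \<and> qz_quasi_compact R Rg M Mg (qp_spec R Rg M Mg)"
proof -
  have "qz_open R Rg M Mg (GX R Rg M Mg r) \<and> qz_quasi_compact R Rg M Mg (GX R Rg M Mg r)"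
    if rh: "r \<in> hom_elems Rg" for r
  proof -
    obtain d where r: "r \<in> Rg d" using rh hom_iff by auto
    have "qz_open R Rg M Mg (GX R Rg M Mg r)"
      unfolding qz_open_def GX_def using scal_graded[OF r] by blast
    then show ?thesis using GX_compact[OF surj r] by blast
  qed
  moreover have "qz_quasi_compact R Rg M Mg (qp_spec R Rg M Mg)"
    using GX_compact[OF surj one_hom] spec_GX_one by simp
  ultimately show ?thesis by blast
qed

end

theorem theorem3p16:
  fixes R :: "('a, 'c) ring_scheme" and Rg :: "'g::group_add \<Rightarrow> 'a set"
    and M :: "('a, 'b) module" and Mg :: "'g \<Rightarrow> 'b set"
  assumes "graded_module R Rg M Mg"
    and "\<forall>q \<in> qp_spec_ring (Rbar R M) (Rbar_grading R Rg M).
           \<exists>Q \<in> qp_spec R Rg M Mg. psi_q R M Q = q"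
  shows "(\<forall>r \<in> hom_elems Rg. qz_open R Rg M Mg (GX R Rg M Mg r)
            \<and> qz_quasi_compact R Rg M Mg (GX R Rg M Mg r))
         \<and> qz_quasi_compact R Rg M Mg (qp_spec R Rg M Mg)"
proof -
  have md: "module R M" using assms(1) unfolding graded_module_def by simp
  interpret G: grmod R M Rg Mg
    by (intro grmod.intro grmod_axioms.intro md assms(1))
  show ?thesis using G.main[OF assms(2)] .
qed

end
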